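(* Let $X$ be a scalar random variable with unknown distribution $\pi$ and an upper bound $u_b \in \mathbb{R}$ such that $\mathbb{P}_{\pi}[X \leq u_b] = 1$. Let $x_1,\dots,x_N$ be $N$ independent samples of $X$, and let $\zeta^*_N$ be the solution of the program $\min_{\zeta \in \mathbb{R}} \zeta$ subject to $\zeta \geq x_i$ for all $i=1,\dots,N$ (i.e. $\zeta^*_N = \max_{1\le k\le N} x_k$). Then for every $\epsilon \in [0,1]$, \[ \mathbb{P}^N_{\pi}\left[\mathbb{E}_{\pi}[X] \leq \zeta^*_N(1-\epsilon) + u_b\epsilon\right] \geq 1-(1-\epsilon)^N . \]
   Context: $\mathbb{P}^N_{\pi}$ denotes the $N$-fold product probability measure governing the i.i.d. sample $(x_1,\dots,x_N)$ drawn from $\pi$. *)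

theory Defs
  imports "HOL-Probability.Probability"
begin

text \<open>Optimal value of the scenario program  min zeta  s.t. zeta >= x i for all i < N,
  namely the largest sample.\<close>
definition zeta_star :: "nat \<Rightarrow> (nat \<Rightarrow> real) \<Rightarrow> real" where
  "zeta_star N xs = Max (xs ` {..<N})"

end

theory Submission
  imports Defs
begin

lemma key_bound:
  fixes M :: "real measure" and u e c :: real
  assumes P: "prob_space M"
    and S: "sets M = sets borel"
    and I: "integrable M (\<lambda>x. x)"
    and A: "AE x in M. x \<le> u"
    and e0: "0 \<le> e" and e1: "e < 1"
    and cdef: "c = ((\<integral>x. x \<partial>M) - u * e) / (1 - e)"
  shows "measure M {..<c} \<le> 1 - e"
proof -
  interpret prob_space M by (rule P)
  define m where "m = (\<integral>x. x \<partial>M)"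
  have mc: "m = c * (1 - e) + u * e" using e1 unfolding cdef m_def by (simp add: field_simps)
  have sp: "space M = UNIV" using sets_eq_imp_space_eq[OF S] by simp
  have Sm: "{..<c} \<in> sets M" using S by simp
  have Cm: "{c..} \<in> sets M" using S by simp
  have mu: "m \<le> u"
  proof -
    have "m \<le> (\<integral>x. u \<partial>M)" unfolding m_def
      by (rule integral_mono_AE[OF I]) (auto intro: A)
    also have "\<dots> = u" by (simp add: prob_space)
    finally show ?thesis .
  qed
  define q where "q = measure M {..<c}"
  have compl: "measure M {c..} = 1 - q"
  proof -
    have "{c..} = space M - {..<c}" using sp by auto
    then show ?thesis unfolding q_def using prob_compl[OF Sm] by simp
  qed
  define g where "g = (\<lambda>x. c * indicator {..<c} x + u * indicator {c..} x :: real)"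
  have gi: "integrable M g" unfolding g_def
  proof (rule Bochner_Integration.integrable_add)
    show "integrable M (\<lambda>x. c * indicator {..<c} x)"
      by (rule integrable_mult_right, rule integrable_real_indicator) (use Sm in \<open>auto simp: emeasure_eq_measure\<close>)
    show "integrable M (\<lambda>x. u * indicator {c..} x)"
      by (rule integrable_mult_right, rule integrable_real_indicator) (use Cm in \<open>auto simp: emeasure_eq_measure\<close>)
  qed
  have "m \<le> integral\<^sup>L M g" unfolding m_def
    by (rule integral_mono_AE[OF I gi]) (use A in \<open>auto simp: g_def indicator_def\<close>)
  also have "integral\<^sup>L M g = c * q + u * (1 - q)"
  proof -
    have "integral\<^sup>L M g = integral\<^sup>L M (\<lambda>x. c * indicator {..<c} x) + integral\<^sup>L M (\<lambda>x. u * indicator {c..} x)"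
      unfolding g_def
      by (rule Bochner_Integration.integral_add) (use Sm Cm in \<open>auto simp: emeasure_eq_measure\<close>)
    also have "\<dots> = c * q + u * (1 - q)"
      using compl sp by (simp add: q_def)
    finally show ?thesis .
  qed
  finally have ineq: "(c - u) * (1 - e) \<le> (c - u) * q" using mc by (simp add: algebra_simps)
  consider "c < u" | "c > u" | "c = u" by linarith
  then show ?thesis
  proof cases
    case 1
    have "(u - c) * q \<le> (u - c) * (1 - e)" using ineq by (simp add: algebra_simps)
    then have "q \<le> 1 - e" using 1 by (simp add: mult_le_cancel_left_pos)
    then show ?thesis unfolding q_def .
  next
    case 2
    have "m - u = (c - u) * (1 - e)" using mc by (simp add: algebra_simps)
    moreover have "(c - u) * (1 - e) > 0" using 2 e1 by simp
    ultimately have "m > u" by simp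
    then show ?thesis using mu by simp
  next
    case 3
    then have mu': "m = u" using mc by (simp add: algebra_simps)
    have "integral\<^sup>L M (\<lambda>x. u - x) = 0"
      using mu' I unfolding m_def by (simp add: prob_space)
    moreover have "integrable M (\<lambda>x. u - x)" using I by simp
    ultimately have "AE x in M. u - x = 0"
      using integral_nonneg_eq_0_iff_AE[of M "\<lambda>x. u - x"] A by auto
    then have "AE x in M. x \<notin> {..<c}" using 3 by auto
    then have "emeasure M {..<c} = 0" using AE_iff_measurable[OF Sm, of "\<lambda>x. x \<notin> {..<c}"] sp by auto
    then have "q = 0" unfolding q_def by (simp add: measure_def)
    then show ?thesis using e1 q_def by simp
  qed
qed

theorem theorem5:
  fixes \<pi> :: "real measure" and u_b :: real and N :: nat and \<epsilon> :: real
  assumes "prob_space \<pi>"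
    and "sets \<pi> = sets borel"
    and "integrable \<pi> (\<lambda>x. x)"
    and "AE x in \<pi>. x \<le> u_b"
    and "N \<ge> 1"
    and "0 \<le> \<epsilon>" and "\<epsilon> \<le> 1"
  shows "measure (PiM {..<N} (\<lambda>_. \<pi>))
           {xs \<in> space (PiM {..<N} (\<lambda>_. \<pi>)).
              (\<integral>x. x \<partial>\<pi>) \<le> zeta_star N xs * (1 - \<epsilon>) + u_b * \<epsilon>}
         \<ge> 1 - (1 - \<epsilon>) ^ N"
proof -
  define P where "P = PiM {..<N} (\<lambda>_. \<pi>)"
  define m where "m = (\<integral>x. x \<partial>\<pi>)"
  interpret pi: prob_space \<pi> by (rule assms(1))
  interpret PP: product_prob_space "\<lambda>_. \<pi>" "{..<N}"
    by (simp add: product_prob_space_def product_prob_space_axioms_def product_sigma_finite_def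
        assms(1) pi.sigma_finite_measure)
  interpret P: prob_space P unfolding P_def by (rule prob_space_PiM) (rule assms(1))
  have sp: "space \<pi> = UNIV" using sets_eq_imp_space_eq[OF assms(2)] by simp
  have spP: "space P = PiE {..<N} (\<lambda>_. UNIV)" unfolding P_def space_PiM sp ..
  have mu: "m \<le> u_b"
  proof -
    have "m \<le> (\<integral>x. u_b \<partial>\<pi>)" unfolding m_def
      by (rule integral_mono_AE[OF assms(3)]) (auto intro: assms(4))
    also have "\<dots> = u_b" by (simp add: pi.prob_space)
    finally show ?thesis .
  qed
  have ne: "xs ` {..<N} \<noteq> {}" for xs :: "nat \<Rightarrow> real" using assms(5) by (auto simp: lessThan_empty_iff)
  show ?thesis
  proof (cases "\<epsilon> = 1")
    case True
    have "{xs \<in> space P. m \<le> zeta_star N xs * (1 - \<epsilon>) + u_b * \<epsilon>} = space P"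
      using True mu by auto
    then show ?thesis using True assms(5) P.prob_space unfolding P_def[symmetric] m_def[symmetric]
      by simp
  next
    case False
    then have e1: "\<epsilon> < 1" using assms(7) by simp
    define c where "c = (m - u_b * \<epsilon>) / (1 - \<epsilon>)"
    have q: "measure \<pi> {..<c} \<le> 1 - \<epsilon>"
      by (rule key_bound[OF assms(1-4) assms(6) e1]) (simp add: c_def m_def)
    define B where "B = PiE {..<N} (\<lambda>_. {..<c})"
    have Bm: "B \<in> sets P" unfolding B_def P_def
      by (rule sets_PiM_I_finite) (use assms(2) in auto)
    have "emeasure P B = (\<Prod>i\<in>{..<N}. emeasure \<pi> {..<c})" unfolding B_def P_def
      by (rule PP.emeasure_PiM) (use assms(2) in auto)
    then have "measure P B = measure \<pi> {..<c} ^ N"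
      by (simp add: P.emeasure_eq_measure pi.emeasure_eq_measure prod_ennreal measure_nonneg
          ennreal_power)
    also have "\<dots> \<le> (1 - \<epsilon>) ^ N" by (rule power_mono[OF q measure_nonneg])
    finally have mB: "measure P B \<le> (1 - \<epsilon>) ^ N" .
    have eq: "{xs \<in> space P. m \<le> zeta_star N xs * (1 - \<epsilon>) + u_b * \<epsilon>} = space P - B"
    proof (intro set_eqI iffI)
      fix xs assume xs: "xs \<in> {xs \<in> space P. m \<le> zeta_star N xs * (1 - \<epsilon>) + u_b * \<epsilon>}"
      then have "c \<le> zeta_star N xs" using e1 unfolding c_def
        by (simp add: divide_le_eq algebra_simps)
      moreover have "zeta_star N xs \<in> xs ` {..<N}" unfolding zeta_star_def
        using ne[of xs] by (intro Max_in) auto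
      ultimately have "\<not> (\<forall>i<N. xs i < c)" by force
      then show "xs \<in> space P - B" using xs unfolding B_def by auto
    next
      fix xs assume xs: "xs \<in> space P - B"
      then have "\<not> (\<forall>i<N. xs i < c)" using spP unfolding B_def by auto
      then obtain i where "i < N" "c \<le> xs i" by force
      then have "c \<le> zeta_star N xs" unfolding zeta_star_def
        by (meson Max_ge finite_imageI finite_lessThan lessThan_iff imageI order_trans)
      then have "m \<le> zeta_star N xs * (1 - \<epsilon>) + u_b * \<epsilon>" using e1 unfolding c_def
        by (simp add: divide_le_eq algebra_simps)
      then show "xs \<in> {xs \<in> space P. m \<le> zeta_star N xs * (1 - \<epsilon>) + u_b * \<epsilon>}"
        using xs by auto
    qed
    have "measure P (space P - B) = 1 - measure P B" by (rule P.prob_compl[OF Bm])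
    then show ?thesis using eq mB unfolding P_def[symmetric] m_def[symmetric] by simp
  qed
qed

end
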